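(* If $G$ is a tree, then $\mathcal{P}(G)=\mathcal{T}(G)$.
   Context: A tree is a connected graph with no cycle. A co-2-plex is a vertex set inducing a subgraph of maximum degree at most 1. $\mathcal{P}(G)=\mathrm{conv}\{\chi^S : S\text{ co-2-plex of } G\}\subseteq\mathbb{R}^V$. $\mathcal{T}(G)$ is the polytope of $x\in\mathbb{R}^V$ satisfying $0\le x\le 1$ and $x(W)+(|W|-1)x_w\le|W|$ for all $w\in V$ and $W\subseteq N(w)$, where $x(A)=\sum_{a\in A}x_a$. *)

theory Defs
  imports "HOL-Analysis.Analysis"
begin

text \<open>A finite simple graph on the finite vertex type 'n (vertex set V = UNIV),
given by an adjacency relation E. R^V is modelled as real^'n.\<close>

definition simple_graph :: "('n::finite \<Rightarrow> 'n \<Rightarrow> bool) \<Rightarrow> bool" where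
  "simple_graph E \<longleftrightarrow> (\<forall>u v. E u v \<longrightarrow> E v u) \<and> (\<forall>v. \<not> E v v)"

definition graph_connected :: "('n::finite \<Rightarrow> 'n \<Rightarrow> bool) \<Rightarrow> bool" where
  "graph_connected E \<longleftrightarrow> (\<forall>u v. E\<^sup>*\<^sup>* u v)"

definition has_cycle :: "('n::finite \<Rightarrow> 'n \<Rightarrow> bool) \<Rightarrow> bool" where
  "has_cycle E \<longleftrightarrow> (\<exists>vs. length vs \<ge> 3 \<and> distinct vs \<and>
     (\<forall>i < length vs. E (vs ! i) (vs ! ((i + 1) mod length vs))))"

definition is_tree :: "('n::finite \<Rightarrow> 'n \<Rightarrow> bool) \<Rightarrow> bool" where
  "is_tree E \<longleftrightarrow> simple_graph E \<and> graph_connected E \<and> \<not> has_cycle E"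

definition nbhd :: "('n::finite \<Rightarrow> 'n \<Rightarrow> bool) \<Rightarrow> 'n \<Rightarrow> 'n set" where
  "nbhd E w = {u. E w u}"

definition co2plex :: "('n::finite \<Rightarrow> 'n \<Rightarrow> bool) \<Rightarrow> 'n set \<Rightarrow> bool" where
  "co2plex E S \<longleftrightarrow> (\<forall>v\<in>S. card (nbhd E v \<inter> S) \<le> 1)"

definition charvec :: "'n::finite set \<Rightarrow> real ^ 'n" where
  "charvec S = (\<chi> v. if v \<in> S then 1 else 0)"

definition co2plex_polytope :: "('n::finite \<Rightarrow> 'n \<Rightarrow> bool) \<Rightarrow> (real ^ 'n) set" where
  "co2plex_polytope E = convex hull {charvec S | S. co2plex E S}"

definition T_polytope :: "('n::finite \<Rightarrow> 'n \<Rightarrow> bool) \<Rightarrow> (real ^ 'n) set" where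
  "T_polytope E = {x. (\<forall>v. 0 \<le> x $ v \<and> x $ v \<le> 1) \<and>
     (\<forall>w W. W \<subseteq> nbhd E w \<longrightarrow>
        (\<Sum>a\<in>W. x $ a) + (real (card W) - 1) * x $ w \<le> real (card W))}"

end

theory Submission imports Defs begin

definition gpath :: "('n::finite \<Rightarrow> 'n \<Rightarrow> bool) \<Rightarrow> 'n set \<Rightarrow> 'n list \<Rightarrow> bool" where
  "gpath E V vs \<longleftrightarrow> vs \<noteq> [] \<and> distinct vs \<and> set vs \<subseteq> V \<and>
     (\<forall>i. Suc i < length vs \<longrightarrow> E (vs ! i) (vs ! Suc i))"

lemma low_deg:
  fixes E :: "'n::finite \<Rightarrow> 'n \<Rightarrow> bool"
  assumes sg: "simple_graph E" and nc: "\<not> has_cycle E" and ne: "V \<noteq> {}"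
  shows "\<exists>l\<in>V. \<forall>u\<in>V. \<forall>v\<in>V. E l u \<longrightarrow> E l v \<longrightarrow> u = v"
proof (rule ccontr)
  assume H: "\<not> ?thesis"
  have sym: "\<And>u v. E u v \<Longrightarrow> E v u" and irr: "\<And>v. \<not> E v v"
    using sg unfolding simple_graph_def by auto
  obtain v0 where "v0 \<in> V" using ne by auto
  then have P0: "\<exists>vs. gpath E V vs \<and> length vs = 1"
    by (intro exI[of _ "[v0]"]) (auto simp: gpath_def)
  have bnd: "\<forall>n. (\<exists>vs. gpath E V vs \<and> length vs = n) \<longrightarrow> n \<le> card V"
  proof (intro allI impI)
    fix n assume "\<exists>vs. gpath E V vs \<and> length vs = n"
    then obtain vs where "gpath E V vs" "length vs = n" by auto
    then show "n \<le> card V" unfolding gpath_def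
      by (metis card_mono distinct_card finite)
  qed
  obtain m where m: "\<exists>vs. gpath E V vs \<and> length vs = m"
    and mmax: "\<forall>n. (\<exists>vs. gpath E V vs \<and> length vs = n) \<longrightarrow> n \<le> m"
    using Nat.ex_has_greatest_nat[OF P0 bnd] by blast
  then obtain vs where vs: "gpath E V vs" "length vs = m" by auto
  obtain v rest where vr: "vs = v # rest" using vs unfolding gpath_def by (cases vs) auto
  have "v \<in> V" using vs vr unfolding gpath_def by auto
  then obtain u1 u2 where u: "u1 \<in> V" "u2 \<in> V" "E v u1" "E v u2" "u1 \<noteq> u2" using H by blast
  have ext: False if "u \<in> V" "E v u" "u \<notin> set vs" for u
  proof -
    have "gpath E V (u # vs)"
      using vs(1) that vr sym unfolding gpath_def
      by (auto simp: nth_Cons split: nat.splits)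
    then show False using mmax vs(2) by fastforce
  qed
  show False
  proof (cases rest)
    case Nil
    then show False using ext[OF u(1) u(3)] irr u vr by auto
  next
    case (Cons w rest')
    obtain u where uu: "u \<in> V" "E v u" "u \<noteq> w" using u by metis
    have "u \<in> set vs" using ext uu by blast
    then obtain j where j: "j < length vs" "vs ! j = u" by (auto simp: in_set_conv_nth)
    have "j \<noteq> 0" proof assume "j = 0" then have "u = v" using j vr by auto then show False using irr uu by auto qed
    moreover have "j \<noteq> 1" using j vr Cons uu by auto
    ultimately have j2: "j \<ge> 2" by auto
    define c where "c = take (Suc j) vs"
    have lc: "length c = Suc j" using j unfolding c_def by auto
    have "has_cycle E"
      unfolding has_cycle_def
    proof (intro exI[of _ c] conjI allI impI)
      show "3 \<le> length c" using lc j2 by auto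
      show "distinct c" using vs(1) unfolding c_def gpath_def by auto
      fix i assume i: "i < length c"
      show "E (c ! i) (c ! ((i + 1) mod length c))"
      proof (cases "i < j")
        case True
        then have "(i + 1) mod length c = Suc i" using lc by auto
        then show ?thesis using True vs(1) j unfolding c_def gpath_def by auto
      next
        case False
        then have "i = j" using i lc by auto
        then have "(i + 1) mod length c = 0" using lc by auto
        moreover have "c ! i = u" "c ! 0 = v" using \<open>i = j\<close> j vr unfolding c_def by (auto simp del: take_Suc_Cons)
        ultimately show ?thesis using sym uu by auto
      qed
    qed
    then show False using nc by auto
  qed
qed


definition good :: "('n::finite \<Rightarrow> 'n \<Rightarrow> bool) \<Rightarrow> real^'n \<Rightarrow> 'n set \<Rightarrow> ('n set \<Rightarrow> real) \<Rightarrow> bool" where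
"good E x V \<mu> \<longleftrightarrow> (\<forall>S. 0 \<le> \<mu> S) \<and> (\<forall>S. \<mu> S \<noteq> 0 \<longrightarrow> S \<subseteq> V \<and> co2plex E S) \<and> (\<Sum>S\<in>UNIV. \<mu> S) = 1
  \<and> (\<forall>v\<in>V. (\<Sum>S\<in>UNIV. \<mu> S * of_bool (v\<in>S)) = x$v)
  \<and> (\<forall>u\<in>V. \<forall>v\<in>V. E u v \<longrightarrow> (\<Sum>S\<in>UNIV. \<mu> S * of_bool (u\<in>S \<and> v\<in>S)) = max 0 (x$u + x$v - 1))"

definition extd :: "('n set \<Rightarrow> real) \<Rightarrow> ('n set \<Rightarrow> real) \<Rightarrow> 'n \<Rightarrow> 'n set \<Rightarrow> real" where
"extd \<mu> \<alpha> l T = (if l \<in> T then \<mu> (T - {l}) * \<alpha> (T - {l}) else \<mu> T * (1 - \<alpha> T))"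

lemma sum_supp_cong:
  fixes \<mu> :: "'n::finite set \<Rightarrow> real"
  assumes "\<And>S. \<mu> S \<noteq> 0 \<Longrightarrow> g S = h S"
  shows "(\<Sum>S\<in>UNIV. \<mu> S * g S) = (\<Sum>S\<in>UNIV. \<mu> S * h S)"
  by (rule sum.cong) (use assms in auto)

lemma extd_sum:
  fixes \<mu> :: "'n::finite set \<Rightarrow> real"
  assumes supp: "\<And>S. \<mu> S \<noteq> 0 \<Longrightarrow> l \<notin> S"
  shows "(\<Sum>T\<in>UNIV. extd \<mu> \<alpha> l T * f T) =
         (\<Sum>S\<in>UNIV. \<mu> S * (\<alpha> S * f (insert l S) + (1 - \<alpha> S) * f S))"
proof -
  let ?A = "{T. l \<notin> T}"
  have U: "(UNIV :: 'n set set) = ?A \<union> insert l ` ?A"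
  proof -
    have "T \<in> ?A \<union> insert l ` ?A" for T
      by (cases "l \<in> T") (auto intro!: image_eqI[of _ _ "T - {l}"])
    then show ?thesis by auto
  qed
  have D: "?A \<inter> insert l ` ?A = {}" by auto
  have inj: "inj_on (insert l) ?A" by (auto simp: inj_on_def)
  have "(\<Sum>T\<in>UNIV. extd \<mu> \<alpha> l T * f T) = (\<Sum>T\<in>?A. extd \<mu> \<alpha> l T * f T) + (\<Sum>T\<in>insert l ` ?A. extd \<mu> \<alpha> l T * f T)"
    by (subst U, rule sum.union_disjoint) (use D in auto)
  also have "(\<Sum>T\<in>insert l ` ?A. extd \<mu> \<alpha> l T * f T) = (\<Sum>S\<in>?A. extd \<mu> \<alpha> l (insert l S) * f (insert l S))"
    by (rule sum.reindex[OF inj, unfolded comp_def])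
  also have "(\<Sum>S\<in>?A. extd \<mu> \<alpha> l (insert l S) * f (insert l S)) = (\<Sum>S\<in>?A. \<mu> S * \<alpha> S * f (insert l S))"
    by (rule sum.cong) (auto simp: extd_def)
  also have "(\<Sum>T\<in>?A. extd \<mu> \<alpha> l T * f T) = (\<Sum>S\<in>?A. \<mu> S * (1 - \<alpha> S) * f S)"
    by (rule sum.cong) (auto simp: extd_def)
  finally have "(\<Sum>T\<in>UNIV. extd \<mu> \<alpha> l T * f T) = (\<Sum>S\<in>?A. \<mu> S * (\<alpha> S * f (insert l S) + (1 - \<alpha> S) * f S))"
    by (simp add: sum.distrib[symmetric] algebra_simps)
  also have "\<dots> = (\<Sum>S\<in>UNIV. \<mu> S * (\<alpha> S * f (insert l S) + (1 - \<alpha> S) * f S))"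
    by (rule sum.mono_neutral_left) (use supp in auto)
  finally show ?thesis .
qed


lemma co2plex_insert:
  fixes E :: "'n::finite \<Rightarrow> 'n \<Rightarrow> bool"
  assumes sg: "simple_graph E" and c: "co2plex E S"
    and h: "\<And>u. u \<in> S \<Longrightarrow> E l u \<Longrightarrow> nbhd E u \<inter> S = {} \<and> (\<forall>u'\<in>S. E l u' \<longrightarrow> u' = u)"
  shows "co2plex E (insert l S)"
  unfolding co2plex_def
proof
  have sym: "\<And>u v. E u v \<Longrightarrow> E v u" and irr: "\<And>v. \<not> E v v"
    using sg unfolding simple_graph_def by auto
  fix v assume v: "v \<in> insert l S"
  show "card (nbhd E v \<inter> insert l S) \<le> 1"
  proof (cases "v = l")
    case True
    have e: "nbhd E l \<inter> insert l S = nbhd E l \<inter> S" using irr by (auto simp: nbhd_def)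
    show ?thesis
    proof (cases "nbhd E l \<inter> S = {}")
      case True then show ?thesis using e \<open>v = l\<close> by simp
    next
      case False
      then obtain u where "u \<in> S" "E l u" by (auto simp: nbhd_def)
      then have "nbhd E l \<inter> S \<subseteq> {u}" using h by (auto simp: nbhd_def)
      then show ?thesis using e \<open>v = l\<close> using card_mono[of "{u}" "nbhd E l \<inter> S"] by simp
    qed
  next
    case False
    then have vS: "v \<in> S" using v by auto
    show ?thesis
    proof (cases "E v l")
      case True
      then have "nbhd E v \<inter> S = {}" using h[OF vS] sym by auto
      then have "nbhd E v \<inter> insert l S = {l}" using True by (auto simp: nbhd_def)
      then show ?thesis by simp
    next
      case False
      then have "nbhd E v \<inter> insert l S = nbhd E v \<inter> S" by (auto simp: nbhd_def)
      then show ?thesis using c vS unfolding co2plex_def by auto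
    qed
  qed
qed

lemma extd_good:
  fixes E :: "'n::finite \<Rightarrow> 'n \<Rightarrow> bool"
  assumes sg: "simple_graph E" and g: "good E x V \<mu>" and lV: "l \<notin> V"
    and a01: "\<And>S. 0 \<le> \<alpha> S \<and> \<alpha> S \<le> 1"
    and cins: "\<And>S. \<mu> S \<noteq> 0 \<Longrightarrow> \<alpha> S \<noteq> 0 \<Longrightarrow> co2plex E (insert l S)"
    and marg: "(\<Sum>S\<in>UNIV. \<mu> S * \<alpha> S) = x$l"
    and edge: "\<And>u. u \<in> V \<Longrightarrow> E u l \<Longrightarrow> (\<Sum>S\<in>UNIV. \<mu> S * (\<alpha> S * of_bool (u\<in>S))) = max 0 (x$u + x$l - 1)"
  shows "good E x (insert l V) (extd \<mu> \<alpha> l)"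
proof -
  have sym: "\<And>u v. E u v \<Longrightarrow> E v u" and irr: "\<And>v. \<not> E v v"
    using sg unfolding simple_graph_def by auto
  have g1: "\<And>S. 0 \<le> \<mu> S" and g2: "\<And>S. \<mu> S \<noteq> 0 \<Longrightarrow> S \<subseteq> V \<and> co2plex E S"
    and g3: "(\<Sum>S\<in>UNIV. \<mu> S) = 1"
    and g4: "\<And>v. v\<in>V \<Longrightarrow> (\<Sum>S\<in>UNIV. \<mu> S * of_bool (v\<in>S)) = x$v"
    and g5: "\<And>u v. u\<in>V \<Longrightarrow> v\<in>V \<Longrightarrow> E u v \<Longrightarrow> (\<Sum>S\<in>UNIV. \<mu> S * of_bool (u\<in>S \<and> v\<in>S)) = max 0 (x$u + x$v - 1)"
    using g unfolding good_def by auto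
  have supp: "\<And>S. \<mu> S \<noteq> 0 \<Longrightarrow> l \<notin> S" using g2 lV by auto
  note ES = extd_sum[OF supp]
  have p1: "\<forall>S. 0 \<le> extd \<mu> \<alpha> l S"
    using g1 a01 by (auto simp: extd_def)
  have p2: "\<forall>T. extd \<mu> \<alpha> l T \<noteq> 0 \<longrightarrow> T \<subseteq> insert l V \<and> co2plex E T"
  proof (intro allI impI)
    fix T assume T: "extd \<mu> \<alpha> l T \<noteq> 0"
    show "T \<subseteq> insert l V \<and> co2plex E T"
    proof (cases "l \<in> T")
      case True
      then have "\<mu> (T - {l}) \<noteq> 0" "\<alpha> (T - {l}) \<noteq> 0" using T by (auto simp: extd_def)
      then have a: "T - {l} \<subseteq> V" "co2plex E (insert l (T - {l}))" using g2[of "T - {l}"] cins[of "T - {l}"] by blast+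
      have "insert l (T - {l}) = T" using True by auto
      then show ?thesis using a by auto
    next
      case False
      then have "\<mu> T \<noteq> 0" using T by (auto simp: extd_def)
      then show ?thesis using g2 by auto
    qed
  qed
  have p3: "(\<Sum>S\<in>UNIV. extd \<mu> \<alpha> l S) = 1"
  proof -
    have "(\<Sum>S\<in>UNIV. extd \<mu> \<alpha> l S * 1) = (\<Sum>S\<in>UNIV. \<mu> S * (\<alpha> S * 1 + (1 - \<alpha> S) * 1))"
      by (rule ES)
    then show ?thesis using g3 by simp
  qed
  have p4: "\<forall>v\<in>insert l V. (\<Sum>S\<in>UNIV. extd \<mu> \<alpha> l S * of_bool (v\<in>S)) = x$v"
  proof
    fix v assume v: "v \<in> insert l V"
    show "(\<Sum>S\<in>UNIV. extd \<mu> \<alpha> l S * of_bool (v\<in>S)) = x$v"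
    proof (cases "v = l")
      case True
      have "(\<Sum>S\<in>UNIV. extd \<mu> \<alpha> l S * of_bool (v\<in>S)) = (\<Sum>S\<in>UNIV. \<mu> S * (\<alpha> S * of_bool (v \<in> insert l S) + (1 - \<alpha> S) * of_bool (v\<in>S)))"
        by (rule ES)
      also have "\<dots> = (\<Sum>S\<in>UNIV. \<mu> S * \<alpha> S)"
        by (rule sum_supp_cong) (use True supp in auto)
      finally show ?thesis using marg True by simp
    next
      case False
      have "(\<Sum>S\<in>UNIV. extd \<mu> \<alpha> l S * of_bool (v\<in>S)) = (\<Sum>S\<in>UNIV. \<mu> S * (\<alpha> S * of_bool (v \<in> insert l S) + (1 - \<alpha> S) * of_bool (v\<in>S)))"
        by (rule ES)
      also have "\<dots> = (\<Sum>S\<in>UNIV. \<mu> S * of_bool (v\<in>S))"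
        by (rule sum_supp_cong) (use False in \<open>auto simp: algebra_simps\<close>)
      finally show ?thesis using g4 False v by simp
    qed
  qed
  have p5: "\<forall>u\<in>insert l V. \<forall>v\<in>insert l V. E u v \<longrightarrow> (\<Sum>S\<in>UNIV. extd \<mu> \<alpha> l S * of_bool (u\<in>S \<and> v\<in>S)) = max 0 (x$u + x$v - 1)"
  proof (intro ballI impI)
    fix u v assume u: "u \<in> insert l V" and v: "v \<in> insert l V" and uv: "E u v"
    have e: "(\<Sum>S\<in>UNIV. extd \<mu> \<alpha> l S * of_bool (u\<in>S \<and> v\<in>S)) = (\<Sum>S\<in>UNIV. \<mu> S * (\<alpha> S * of_bool (u \<in> insert l S \<and> v \<in> insert l S) + (1 - \<alpha> S) * of_bool (u\<in>S \<and> v\<in>S)))"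
      by (rule ES)
    show "(\<Sum>S\<in>UNIV. extd \<mu> \<alpha> l S * of_bool (u\<in>S \<and> v\<in>S)) = max 0 (x$u + x$v - 1)"
    proof (cases "u = l")
      case True
      then have vl: "v \<noteq> l" using uv irr by auto
      have "(\<Sum>S\<in>UNIV. extd \<mu> \<alpha> l S * of_bool (u\<in>S \<and> v\<in>S)) = (\<Sum>S\<in>UNIV. \<mu> S * (\<alpha> S * of_bool (v\<in>S)))"
        unfolding e by (rule sum_supp_cong) (use True vl supp in auto)
      also have "\<dots> = max 0 (x$v + x$l - 1)" using edge[of v] vl v uv sym True by auto
      finally show ?thesis using True by (simp add: add.commute)
    next
      case False
      show ?thesis
      proof (cases "v = l")
        case True
        have "(\<Sum>S\<in>UNIV. extd \<mu> \<alpha> l S * of_bool (u\<in>S \<and> v\<in>S)) = (\<Sum>S\<in>UNIV. \<mu> S * (\<alpha> S * of_bool (u\<in>S)))"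
          unfolding e by (rule sum_supp_cong) (use True False supp in auto)
        also have "\<dots> = max 0 (x$u + x$l - 1)" using edge[of u] False u uv True by auto
        finally show ?thesis using True by simp
      next
        case False2: False
        have "(\<Sum>S\<in>UNIV. extd \<mu> \<alpha> l S * of_bool (u\<in>S \<and> v\<in>S)) = (\<Sum>S\<in>UNIV. \<mu> S * of_bool (u\<in>S \<and> v\<in>S))"
          unfolding e by (rule sum_supp_cong) (use False False2 in \<open>auto simp: algebra_simps\<close>)
        also have "\<dots> = max 0 (x$u + x$v - 1)" using g5 False False2 u v uv by auto
        finally show ?thesis .
      qed
    qed
  qed
  show ?thesis unfolding good_def using p1 p2 p3 p4 p5 by blast
qed


lemma frac01: "0 \<le> (c::real) \<Longrightarrow> c \<le> C \<Longrightarrow> 0 \<le> c / C \<and> c / C \<le> 1"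
  by (cases "C = 0") auto

lemma fracm: "0 \<le> (c::real) \<Longrightarrow> c \<le> C \<Longrightarrow> c / C * C = c"
  by (cases "C = 0") auto

lemma sum_ofbool_card: "finite N \<Longrightarrow> (\<Sum>u\<in>N. of_bool (u \<in> S) :: real) = real (card (N \<inter> S))"
proof -
  assume f: "finite N"
  have "(\<Sum>u\<in>N \<inter> S. (1::real)) = (\<Sum>u\<in>N. if u \<in> S then 1 else 0)"
    using sum.inter_restrict[OF f, of "\<lambda>_. (1::real)" S] by simp
  then show ?thesis by (simp add: of_bool_def)
qed

lemma extend_step:
  fixes E :: "'n::finite \<Rightarrow> 'n \<Rightarrow> bool"
  assumes sg: "simple_graph E" and xT: "x \<in> T_polytope E" and g: "good E x V \<mu>" and lV: "l \<notin> V"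
    and hl: "\<forall>u\<in>V. \<forall>v\<in>V. E l u \<longrightarrow> E l v \<longrightarrow> u = v"
  shows "\<exists>\<mu>'. good E x (insert l V) \<mu>'"
proof -
  have sym: "\<And>u v. E u v \<Longrightarrow> E v u" and irr: "\<And>v. \<not> E v v"
    using sg unfolding simple_graph_def by auto
  have hx: "\<And>v. 0 \<le> x$v \<and> x$v \<le> 1"
    and hW: "\<And>w W. W \<subseteq> nbhd E w \<Longrightarrow> (\<Sum>a\<in>W. x $ a) + (real (card W) - 1) * x $ w \<le> real (card W)"
    using xT unfolding T_polytope_def by auto
  have g1: "\<And>S. 0 \<le> \<mu> S" and g2: "\<And>S. \<mu> S \<noteq> 0 \<Longrightarrow> S \<subseteq> V \<and> co2plex E S"
    and g3: "(\<Sum>S\<in>UNIV. \<mu> S) = 1"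
    and g4: "\<And>v. v\<in>V \<Longrightarrow> (\<Sum>S\<in>UNIV. \<mu> S * of_bool (v\<in>S)) = x$v"
    and g5: "\<And>u v. u\<in>V \<Longrightarrow> v\<in>V \<Longrightarrow> E u v \<Longrightarrow> (\<Sum>S\<in>UNIV. \<mu> S * of_bool (u\<in>S \<and> v\<in>S)) = max 0 (x$u + x$v - 1)"
    using g unfolding good_def by auto
  show ?thesis
  proof (cases "\<exists>p\<in>V. E l p")
    case False
    have "good E x (insert l V) (extd \<mu> (\<lambda>_. x$l) l)"
    proof (rule extd_good[OF sg g lV])
      show "\<And>S. 0 \<le> x$l \<and> x$l \<le> 1" using hx by auto
      show "co2plex E (insert l S)" if "\<mu> S \<noteq> 0" "x$l \<noteq> 0" for S
        using g2[OF that(1)] False by (intro co2plex_insert[OF sg]) auto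
      show "(\<Sum>S\<in>UNIV. \<mu> S * x$l) = x$l" using g3 by (simp add: sum_distrib_right[symmetric])
      show "(\<Sum>S\<in>UNIV. \<mu> S * (x$l * of_bool (u\<in>S))) = max 0 (x$u + x$l - 1)" if "u \<in> V" "E u l" for u
        using False that sym by auto
    qed
    then show ?thesis by blast
  next
    case True
    then obtain p where pV: "p \<in> V" and lp: "E l p" by auto
    have onlyp: "\<And>u. u \<in> V \<Longrightarrow> E l u \<Longrightarrow> u = p" using hl pV lp by blast
    define N where "N = nbhd E p \<inter> V"
    define o1 where "o1 S = (of_bool (p \<notin> S) :: real)" for S
    define o2 where "o2 S = (of_bool (p \<in> S \<and> nbhd E p \<inter> S = {}) :: real)" for S
    define A where "A = (\<Sum>S\<in>UNIV. \<mu> S * o1 S)"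
    define B where "B = (\<Sum>S\<in>UNIV. \<mu> S * o2 S)"
    have A_eq: "A = 1 - x$p"
    proof -
      have "A = (\<Sum>S\<in>UNIV. \<mu> S - \<mu> S * of_bool (p\<in>S))"
        unfolding A_def o1_def by (rule sum.cong) auto
      also have "\<dots> = 1 - x$p" using g3 g4[OF pV] by (simp add: sum_subtractf)
      finally show ?thesis .
    qed
    have perS: "of_bool (p\<in>S) = o2 S + (\<Sum>u\<in>N. of_bool (p\<in>S \<and> u\<in>S))" if "\<mu> S \<noteq> 0" for S
    proof -
      have SV: "S \<subseteq> V" and cS: "co2plex E S" using g2[OF that] by auto
      show ?thesis
      proof (cases "p \<in> S")
        case False then show ?thesis by (simp add: o2_def)
      next
        case True
        have "(\<Sum>u\<in>N. of_bool (p\<in>S \<and> u\<in>S)) = (\<Sum>u\<in>N. of_bool (u\<in>S) :: real)"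
          using True by simp
        also have "\<dots> = real (card (N \<inter> S))" by (rule sum_ofbool_card) simp
        also have "N \<inter> S = nbhd E p \<inter> S" using SV unfolding N_def by auto
        finally have e: "(\<Sum>u\<in>N. of_bool (p\<in>S \<and> u\<in>S)) = real (card (nbhd E p \<inter> S))" .
        have c1: "card (nbhd E p \<inter> S) \<le> 1" using cS True unfolding co2plex_def by auto
        show ?thesis
        proof (cases "nbhd E p \<inter> S = {}")
          case True2: True
          then show ?thesis using e True by (simp add: o2_def)
        next
          case False
          then have "card (nbhd E p \<inter> S) \<noteq> 0" by simp
          then have "card (nbhd E p \<inter> S) = 1" using c1 by linarith
          then show ?thesis using e True False by (simp add: o2_def)
        qed
      qed
    qed
    have B_eq: "x$p = B + (\<Sum>u\<in>N. max 0 (x$p + x$u - 1))"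
    proof -
      have "x$p = (\<Sum>S\<in>UNIV. \<mu> S * of_bool (p\<in>S))" using g4[OF pV] by simp
      also have "\<dots> = (\<Sum>S\<in>UNIV. \<mu> S * (o2 S + (\<Sum>u\<in>N. of_bool (p\<in>S \<and> u\<in>S))))"
        by (rule sum_supp_cong) (rule perS)
      also have "\<dots> = B + (\<Sum>S\<in>UNIV. (\<Sum>u\<in>N. \<mu> S * of_bool (p\<in>S \<and> u\<in>S)))"
        unfolding B_def by (simp add: algebra_simps sum.distrib sum_distrib_left)
      also have "(\<Sum>S\<in>UNIV. (\<Sum>u\<in>N. \<mu> S * of_bool (p\<in>S \<and> u\<in>S))) = (\<Sum>u\<in>N. (\<Sum>S\<in>UNIV. \<mu> S * of_bool (p\<in>S \<and> u\<in>S)))"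
        by (rule sum.swap)
      also have "\<dots> = (\<Sum>u\<in>N. max 0 (x$p + x$u - 1))"
      proof (rule sum.cong[OF refl])
        fix u assume "u \<in> N"
        then show "(\<Sum>S\<in>UNIV. \<mu> S * of_bool (p\<in>S \<and> u\<in>S)) = max 0 (x$p + x$u - 1)"
          using g5[OF pV, of u] by (auto simp: N_def nbhd_def)
      qed
      finally show ?thesis .
    qed
    have cons: "x$l + x$p - 1 \<le> B"
    proof -
      define W' where "W' = {u\<in>N. 0 < x$p + x$u - 1}"
      have fW: "finite W'" by simp
      have lW: "l \<notin> W'" using lV unfolding W'_def N_def by auto
      have s1: "(\<Sum>u\<in>N. max 0 (x$p + x$u - 1)) = (\<Sum>u\<in>W'. x$p + x$u - 1)"
        unfolding W'_def by (subst sum.inter_filter) (auto simp: max_def intro!: sum.cong)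
      have s2: "(\<Sum>u\<in>W'. x$p + x$u - 1) = (\<Sum>u\<in>W'. x$u) + real (card W') * x$p - real (card W')"
        by (simp add: sum.distrib sum_subtractf)
      have Wsub: "insert l W' \<subseteq> nbhd E p" using lp sym unfolding W'_def N_def nbhd_def by auto
      have "(\<Sum>a\<in>insert l W'. x $ a) + (real (card (insert l W')) - 1) * x $ p \<le> real (card (insert l W'))"
        by (rule hW[OF Wsub])
      then have "x$l + (\<Sum>a\<in>W'. x $ a) + real (card W') * x $ p \<le> real (card W') + 1"
        using fW lW by simp
      then show ?thesis using B_eq s1 s2 by linarith
    qed
    define b where "b = max 0 (x$l + x$p - 1)"
    define a where "a = x$l - b"
    have b01: "0 \<le> b" "b \<le> B"
      using cons hx[of l] hx[of p] B_eq unfolding b_def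
      by (auto simp: B_def o2_def g1 intro!: sum_nonneg)
    have a01: "0 \<le> a" "a \<le> A" using hx[of l] hx[of p] A_eq unfolding a_def b_def by auto
    define \<alpha> where "\<alpha> S = o1 S * (a / A) + o2 S * (b / B)" for S
    have "good E x (insert l V) (extd \<mu> \<alpha> l)"
    proof (rule extd_good[OF sg g lV])
      show "0 \<le> \<alpha> S \<and> \<alpha> S \<le> 1" for S
        using frac01[OF a01] frac01[OF b01] unfolding \<alpha>_def o1_def o2_def by auto
      show "co2plex E (insert l S)" if "\<mu> S \<noteq> 0" "\<alpha> S \<noteq> 0" for S
      proof (rule co2plex_insert[OF sg])
        show "co2plex E S" using g2[OF that(1)] by auto
        fix u assume u: "u \<in> S" "E l u"
        have "u = p" using u g2[OF that(1)] onlyp by auto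
        then have "nbhd E p \<inter> S = {}" using that(2) u unfolding \<alpha>_def o1_def o2_def by auto
        then show "nbhd E u \<inter> S = {} \<and> (\<forall>u'\<in>S. E l u' \<longrightarrow> u' = u)"
          using \<open>u = p\<close> g2[OF that(1)] onlyp by auto
      qed
      have "(\<Sum>S\<in>UNIV. \<mu> S * \<alpha> S) = (\<Sum>S\<in>UNIV. (\<mu> S * o1 S) * (a / A) + (\<mu> S * o2 S) * (b / B))"
        by (rule sum.cong) (auto simp: \<alpha>_def algebra_simps)
      also have "\<dots> = A * (a / A) + B * (b / B)"
        by (simp only: sum.distrib sum_distrib_right[symmetric] A_def B_def)
      also have "\<dots> = a + b" using fracm[OF a01] fracm[OF b01] by (simp add: mult.commute)
      finally show "(\<Sum>S\<in>UNIV. \<mu> S * \<alpha> S) = x$l" unfolding a_def by simp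
      show "(\<Sum>S\<in>UNIV. \<mu> S * (\<alpha> S * of_bool (u\<in>S))) = max 0 (x$u + x$l - 1)" if "u \<in> V" "E u l" for u
      proof -
        have up: "u = p" using onlyp sym that by auto
        have "(\<Sum>S\<in>UNIV. \<mu> S * (\<alpha> S * of_bool (u\<in>S))) = (\<Sum>S\<in>UNIV. \<mu> S * o2 S * (b / B))"
          unfolding \<alpha>_def o1_def o2_def up by (rule sum.cong) auto
        also have "\<dots> = B * (b / B)" by (simp only: sum_distrib_right[symmetric] B_def)
        also have "\<dots> = b" using fracm[OF b01] by (simp add: mult.commute)
        finally show ?thesis unfolding b_def up by (simp add: add.commute)
      qed
    qed
    then show ?thesis by blast
  qed
qed


lemma exists_good:
  fixes E :: "'n::finite \<Rightarrow> 'n \<Rightarrow> bool"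
  assumes sg: "simple_graph E" and nc: "\<not> has_cycle E" and xT: "x \<in> T_polytope E"
  shows "\<exists>\<mu>. good E x V \<mu>"
  using finite[of V]
proof (induction V rule: finite_psubset_induct)
  case (psubset V)
  show ?case
  proof (cases "V = {}")
    case True
    have "good E x V (\<lambda>S. if S = {} then 1 else 0)"
      unfolding good_def using True by (auto simp: co2plex_def)
    then show ?thesis by blast
  next
    case False
    obtain l where l: "l \<in> V" and hl: "\<forall>u\<in>V. \<forall>v\<in>V. E l u \<longrightarrow> E l v \<longrightarrow> u = v"
      using low_deg[OF sg nc False] by blast
    obtain \<mu> where "good E x (V - {l}) \<mu>" using psubset.IH[of "V - {l}"] l by blast
    then have "\<exists>\<mu>'. good E x (insert l (V - {l})) \<mu>'"
      by (rule extend_step[OF sg xT]) (use hl in auto)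
    then show ?thesis using l by (simp add: insert_absorb)
  qed
qed

lemma T_convex:
  fixes E :: "'n::finite \<Rightarrow> 'n \<Rightarrow> bool"
  shows "convex (T_polytope E)"
  unfolding convex_def
proof (intro ballI allI impI)
  fix x y :: "real^'n" and u v :: real
  assume x: "x \<in> T_polytope E" and y: "y \<in> T_polytope E" and uv: "0 \<le> u" "0 \<le> v" "u + v = 1"
  have hx: "\<And>i. 0 \<le> x$i \<and> x$i \<le> 1" and hy: "\<And>i. 0 \<le> y$i \<and> y$i \<le> 1"
    using x y unfolding T_polytope_def by auto
  have cx: "\<And>w W. W \<subseteq> nbhd E w \<Longrightarrow> (\<Sum>a\<in>W. x $ a) + (real (card W) - 1) * x $ w \<le> real (card W)"
   and cy: "\<And>w W. W \<subseteq> nbhd E w \<Longrightarrow> (\<Sum>a\<in>W. y $ a) + (real (card W) - 1) * y $ w \<le> real (card W)"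
    using x y unfolding T_polytope_def by auto
  let ?z = "u *\<^sub>R x + v *\<^sub>R y"
  have "0 \<le> ?z$i \<and> ?z$i \<le> 1" for i
  proof -
    have "u * x$i \<le> u" "v * y$i \<le> v" using hx[of i] hy[of i] uv by (auto intro: mult_left_le)
    then show ?thesis using hx[of i] hy[of i] uv by simp
  qed
  moreover have "(\<Sum>a\<in>W. ?z $ a) + (real (card W) - 1) * ?z $ w \<le> real (card W)" if "W \<subseteq> nbhd E w" for w W
  proof -
    have "(\<Sum>a\<in>W. ?z $ a) + (real (card W) - 1) * ?z $ w =
       u * ((\<Sum>a\<in>W. x $ a) + (real (card W) - 1) * x $ w) + v * ((\<Sum>a\<in>W. y $ a) + (real (card W) - 1) * y $ w)"
      by (simp add: sum.distrib sum_distrib_left algebra_simps)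
    also have "\<dots> \<le> u * real (card W) + v * real (card W)"
      using cx[OF that] cy[OF that] uv by (intro add_mono mult_left_mono) auto
    also have "\<dots> = (u + v) * real (card W)" by (simp only: distrib_right)
    also have "\<dots> = real (card W)" using uv by simp
    finally show ?thesis .
  qed
  ultimately show "?z \<in> T_polytope E" unfolding T_polytope_def by blast
qed

lemma charvec_T:
  assumes "co2plex E S" shows "charvec S \<in> T_polytope E"
proof -
  have "(\<Sum>a\<in>W. charvec S $ a) + (real (card W) - 1) * charvec S $ w \<le> real (card W)"
    if "W \<subseteq> nbhd E w" for w W
  proof -
    have s: "(\<Sum>a\<in>W. charvec S $ a) = real (card (W \<inter> S))"
      unfolding charvec_def using sum_ofbool_card[of W S] by (simp add: of_bool_def)
    have "card (W \<inter> S) \<le> card W" by (rule card_mono) auto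
    moreover have "w \<in> S \<Longrightarrow> card (W \<inter> S) \<le> 1"
      using assms that card_mono[of "nbhd E w \<inter> S" "W \<inter> S"] unfolding co2plex_def by fastforce
    ultimately show ?thesis using s by (cases "w \<in> S") (auto simp: charvec_def)
  qed
  then show ?thesis unfolding T_polytope_def by (auto simp: charvec_def)
qed

theorem mainTheorem10:
  fixes E :: "'n::finite \<Rightarrow> 'n \<Rightarrow> bool"
  assumes "is_tree E"
  shows "co2plex_polytope E = T_polytope E"
proof
  have sg: "simple_graph E" and nc: "\<not> has_cycle E" using assms unfolding is_tree_def by auto
  show "co2plex_polytope E \<subseteq> T_polytope E"
    unfolding co2plex_polytope_def
    by (rule hull_minimal) (use charvec_T T_convex in auto)
  show "T_polytope E \<subseteq> co2plex_polytope E"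
  proof
    fix x assume xT: "x \<in> T_polytope E"
    obtain \<mu> where g: "good E x UNIV \<mu>" using exists_good[OF sg nc xT] by blast
    have g1: "\<And>S. 0 \<le> \<mu> S" and g2: "\<And>S. \<mu> S \<noteq> 0 \<Longrightarrow> co2plex E S"
      and g3: "(\<Sum>S\<in>UNIV. \<mu> S) = 1"
      and g4: "\<And>v. (\<Sum>S\<in>UNIV. \<mu> S * of_bool (v\<in>S)) = x$v"
      using g unfolding good_def by auto
    define C where "C = {S. co2plex E S}"
    have sC: "(\<Sum>S\<in>C. \<mu> S) = 1"
      using g3 g2 by (subst sum.mono_neutral_left[of UNIV C]) (auto simp: C_def)
    have "(\<Sum>S\<in>C. \<mu> S *\<^sub>R charvec S) \<in> co2plex_polytope E"
      unfolding co2plex_polytope_def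
      by (rule convex_sum) (use sC g1 in \<open>auto simp: C_def intro: hull_inc\<close>)
    moreover have "(\<Sum>S\<in>C. \<mu> S *\<^sub>R charvec S) = x"
    proof (subst vec_eq_iff, intro allI)
      fix v
      have "(\<Sum>S\<in>C. \<mu> S *\<^sub>R charvec S) $ v = (\<Sum>S\<in>C. \<mu> S * of_bool (v\<in>S))"
        by (simp add: charvec_def of_bool_def)
      also have "\<dots> = (\<Sum>S\<in>UNIV. \<mu> S * of_bool (v\<in>S))"
        by (rule sum.mono_neutral_left) (use g2 in \<open>auto simp: C_def\<close>)
      finally show "(\<Sum>S\<in>C. \<mu> S *\<^sub>R charvec S) $ v = x $ v" using g4 by simp
    qed
    ultimately show "x \<in> co2plex_polytope E" by simp
  qed
qed

end
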